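(* Let $d\ge 2$ and define on $\mathbb{N}_{\ge d-1}=\{d-1,d,d+1,\dots\}$ the operation $a\oplus b=R_d(a+1,b+1)-1$. Then $(\mathbb{N}_{\ge d-1},\oplus,\le,d-1)$ is a totally ordered unital magma, and for every finite set $A$ of hyperplanes in $\mathbb{R}^d$ with $|A|\ge d-1$, the set function $\mu_A$ (defined on all subsets of $\mathbb{R}^d$) takes values in $\mathbb{N}_{\ge d-1}$, is monotone, and is $\mathcal{H}$-subadditive with respect to $\oplus$.
   Context: For a finite set $A$ of hyperplanes in $\mathbb{R}^d$, $V(A)$ is the set of points that are the unique common point of some $d$ hyperplanes of $A$, and $\mu_A(S)=\max\{|A'| : A'\subseteq A,\ V(A')\subseteq S\}$ for $S\subseteq\mathbb{R}^d$. $R_d(a,b)$ is the hypergraph Ramsey number: the least $R$ such that every 2-colouring (colours 1, 2) of the $d$-subsets of an $R$-set contains an $a$-set with all $d$-subsets coloured 1 or a $b$-set with all $d$-subsets coloured 2. A totally ordered unital magma $(M,\oplus,\le,e)$ is a totally ordered set with a binary operation $\oplus$ closed on $M$, having neutral element $e$, and monotone in each argument. $\mu$ is monotone if $X\subseteq Y\Rightarrow\mu(X)\le\mu(Y)$, and $\mathcal{H}$-subadditive if for every finite family $h_1,\dots,h_m$ of open halfspaces, $\mu(h_1\cup\dots\cup h_m)\le\mu(h_1)\oplus(\mu(h_2)\oplus(\cdots\oplus\mu(h_m))\cdots)$. *)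

theory Defs
  imports "HOL-Analysis.Analysis"
begin

definition is_hyperplane :: "'a::euclidean_space set \<Rightarrow> bool" where
  "is_hyperplane H \<longleftrightarrow> (\<exists>a b. a \<noteq> 0 \<and> H = {x. a \<bullet> x = b})"

definition is_open_halfspace :: "'a::euclidean_space set \<Rightarrow> bool" where
  "is_open_halfspace h \<longleftrightarrow> (\<exists>a b. a \<noteq> 0 \<and> h = {x. a \<bullet> x < b})"

definition vertices :: "'a::euclidean_space set set \<Rightarrow> 'a set" where
  "vertices A = {p. \<exists>B. B \<subseteq> A \<and> card B = DIM('a) \<and> \<Inter>B = {p}}"

definition mu :: "'a::euclidean_space set set \<Rightarrow> 'a set \<Rightarrow> nat" where
  "mu A S = Max {card B | B. B \<subseteq> A \<and> vertices B \<subseteq> S}"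

definition ramsey_prop :: "nat \<Rightarrow> nat \<Rightarrow> nat \<Rightarrow> nat \<Rightarrow> bool" where
  "ramsey_prop d a b R \<longleftrightarrow>
     (\<forall>c :: nat set \<Rightarrow> nat.
        (\<forall>X. X \<subseteq> {..<R} \<and> card X = d \<longrightarrow> c X \<in> {1, 2}) \<longrightarrow>
        (\<exists>Y. Y \<subseteq> {..<R} \<and>
           ((card Y = a \<and> (\<forall>X. X \<subseteq> Y \<and> card X = d \<longrightarrow> c X = 1)) \<or>
            (card Y = b \<and> (\<forall>X. X \<subseteq> Y \<and> card X = d \<longrightarrow> c X = 2)))))"

definition hramsey :: "nat \<Rightarrow> nat \<Rightarrow> nat \<Rightarrow> nat" where
  "hramsey d a b = (LEAST R. ramsey_prop d a b R)"

definition tot_ord_unital_magma :: "'a::linorder set \<Rightarrow> ('a \<Rightarrow> 'a \<Rightarrow> 'a) \<Rightarrow> 'a \<Rightarrow> bool" where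
  "tot_ord_unital_magma M f e \<longleftrightarrow>
     e \<in> M \<and>
     (\<forall>x\<in>M. \<forall>y\<in>M. f x y \<in> M) \<and>
     (\<forall>x\<in>M. f e x = x \<and> f x e = x) \<and>
     (\<forall>x\<in>M. \<forall>x'\<in>M. \<forall>y\<in>M. x \<le> x' \<longrightarrow> f x y \<le> f x' y \<and> f y x \<le> f y x')"

fun rfold :: "('b \<Rightarrow> 'b \<Rightarrow> 'b) \<Rightarrow> 'b list \<Rightarrow> 'b" where
  "rfold f [] = undefined"
| "rfold f [x] = x"
| "rfold f (x # y # xs) = f x (rfold f (y # xs))"

definition set_monotone :: "('a set \<Rightarrow> 'b::order) \<Rightarrow> bool" where
  "set_monotone m \<longleftrightarrow> (\<forall>X Y. X \<subseteq> Y \<longrightarrow> m X \<le> m Y)"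

definition H_subadditive :: "('a::euclidean_space set \<Rightarrow> 'b::order) \<Rightarrow> ('b \<Rightarrow> 'b \<Rightarrow> 'b) \<Rightarrow> bool" where
  "H_subadditive m f \<longleftrightarrow>
     (\<forall>hs. hs \<noteq> [] \<and> (\<forall>h\<in>set hs. is_open_halfspace h) \<longrightarrow>
        m (\<Union>(set hs)) \<le> rfold f (map m hs))"

end

theory Submission imports Defs "HOL-Library.Ramsey" begin

lemma ramsey_ex: "\<exists>R. ramsey_prop d a b R"
proof -
  obtain N :: nat where N: "partn_lst {..<N} [a,b] d" using ramsey_full by blast
  have "ramsey_prop d a b N"
    unfolding ramsey_prop_def
  proof (intro allI impI)
    fix c :: "nat set \<Rightarrow> nat"
    assume c: "\<forall>X. X \<subseteq> {..<N} \<and> card X = d \<longrightarrow> c X \<in> {1, 2}"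
    define f where "f X = (if c X = 1 then 0 else (1::nat))" for X
    have "f \<in> nsets {..<N} d \<rightarrow> {..<2}" by (auto simp: f_def)
    moreover have "length [a,b] = 2" by simp
    ultimately obtain i H where i: "i < length [a,b]" and H: "H \<in> nsets {..<N} ([a,b]!i)"
      and fH: "f ` (nsets H d) \<subseteq> {i}"
      by (rule partn_lstE[OF N])
    have finH: "finite H" using H by (auto simp: nsets_def)
    show "\<exists>Y. Y \<subseteq> {..<N} \<and>
           ((card Y = a \<and> (\<forall>X. X \<subseteq> Y \<and> card X = d \<longrightarrow> c X = 1)) \<or>
            (card Y = b \<and> (\<forall>X. X \<subseteq> Y \<and> card X = d \<longrightarrow> c X = 2)))"
    proof (cases "i = 0")
      case True
      have "\<forall>X. X \<subseteq> H \<and> card X = d \<longrightarrow> c X = 1"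
      proof (intro allI impI)
        fix X assume X: "X \<subseteq> H \<and> card X = d"
        then have "X \<in> nsets H d" using finH by (auto simp: nsets_def intro: finite_subset)
        then have "f X = 0" using fH True by auto
        then show "c X = 1" unfolding f_def by (cases "c X = 1") simp_all
      qed
      moreover have "H \<subseteq> {..<N}" "card H = a" using H True unfolding nsets_def by auto
      ultimately show ?thesis by blast
    next
      case False
      then have i1: "i = 1" using i by auto
      have "\<forall>X. X \<subseteq> H \<and> card X = d \<longrightarrow> c X = 2"
      proof (intro allI impI)
        fix X assume X: "X \<subseteq> H \<and> card X = d"
        then have "X \<in> nsets H d" using finH by (auto simp: nsets_def intro: finite_subset)
        then have "f X = 1" using fH i1 by auto
        moreover have "X \<subseteq> {..<N}" using X H unfolding nsets_def by blast
        then have "c X \<in> {1,2}" using c X by blast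
        moreover have "c X \<noteq> 1" using \<open>f X = 1\<close> unfolding f_def by (cases "c X = 1") simp_all
        ultimately show "c X = 2" by blast
      qed
      moreover have "H \<subseteq> {..<N}" "card H = b" using H i1 unfolding nsets_def by auto
      ultimately show ?thesis by blast
    qed
  qed
  then show ?thesis by blast
qed

lemma hramsey_prop: "ramsey_prop d a b (hramsey d a b)"
  unfolding hramsey_def using ramsey_ex by (rule LeastI_ex)

lemma hramsey_le: "ramsey_prop d a b R \<Longrightarrow> hramsey d a b \<le> R"
  unfolding hramsey_def by (rule Least_le)

lemma prop_mono:
  assumes "ramsey_prop d a' b' R" "a \<le> a'" "b \<le> b'"
  shows "ramsey_prop d a b R"
  unfolding ramsey_prop_def
proof (intro allI impI)
  fix c :: "nat set \<Rightarrow> nat"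
  assume c: "\<forall>X. X \<subseteq> {..<R} \<and> card X = d \<longrightarrow> c X \<in> {1, 2}"
  then obtain Y where Y: "Y \<subseteq> {..<R}" and
     H: "(card Y = a' \<and> (\<forall>X. X \<subseteq> Y \<and> card X = d \<longrightarrow> c X = 1)) \<or>
            (card Y = b' \<and> (\<forall>X. X \<subseteq> Y \<and> card X = d \<longrightarrow> c X = 2))"
    using assms(1) unfolding ramsey_prop_def by blast
  show "\<exists>Y. Y \<subseteq> {..<R} \<and>
           ((card Y = a \<and> (\<forall>X. X \<subseteq> Y \<and> card X = d \<longrightarrow> c X = 1)) \<or>
            (card Y = b \<and> (\<forall>X. X \<subseteq> Y \<and> card X = d \<longrightarrow> c X = 2)))"
  proof (cases "card Y = a' \<and> (\<forall>X. X \<subseteq> Y \<and> card X = d \<longrightarrow> c X = 1)")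
    case True
    then obtain Z where "Z \<subseteq> Y" "card Z = a" using assms(2) obtain_subset_with_card_n by metis
    moreover have "\<forall>X. X \<subseteq> Z \<and> card X = d \<longrightarrow> c X = 1" using True \<open>Z \<subseteq> Y\<close> by blast
    moreover have "Z \<subseteq> {..<R}" using Y \<open>Z \<subseteq> Y\<close> by blast
    ultimately show ?thesis by blast
  next
    case False
    then have F: "card Y = b' \<and> (\<forall>X. X \<subseteq> Y \<and> card X = d \<longrightarrow> c X = 2)" using H by blast
    then obtain Z where "Z \<subseteq> Y" "card Z = b" using assms(3) obtain_subset_with_card_n by metis
    moreover have "\<forall>X. X \<subseteq> Z \<and> card X = d \<longrightarrow> c X = 2" using F \<open>Z \<subseteq> Y\<close> by blast
    moreover have "Z \<subseteq> {..<R}" using Y \<open>Z \<subseteq> Y\<close> by blast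
    ultimately show ?thesis by blast
  qed
qed

lemma hramsey_mono: "a \<le> a' \<Longrightarrow> b \<le> b' \<Longrightarrow> hramsey d a b \<le> hramsey d a' b'"
  by (rule hramsey_le, rule prop_mono[OF hramsey_prop])

lemma prop_lower: "ramsey_prop d a b R \<Longrightarrow> min a b \<le> R"
proof -
  assume "ramsey_prop d a b R"
  then obtain Y where Y: "Y \<subseteq> {..<R}" and
    H: "(card Y = a \<and> (\<forall>X. X \<subseteq> Y \<and> card X = d \<longrightarrow> (1::nat) = 1)) \<or>
        (card Y = b \<and> (\<forall>X. X \<subseteq> Y \<and> card X = d \<longrightarrow> (1::nat) = 2))"
    unfolding ramsey_prop_def apply (drule_tac x="\<lambda>_. 1" in spec) by auto
  then have "card Y \<le> R" by (metis card_lessThan card_mono finite_lessThan Y)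
  then show ?thesis using H by auto
qed

lemma hramsey_lower: "min a b \<le> hramsey d a b"
  using prop_lower[OF hramsey_prop] .

lemma prop_unit:
  assumes "1 \<le> d" "d \<le> b"
  shows "ramsey_prop d d b b \<and> ramsey_prop d b d b"
proof -
  have key: "\<exists>Y. Y \<subseteq> {..<b} \<and>
           ((card Y = d \<and> (\<forall>X. X \<subseteq> Y \<and> card X = d \<longrightarrow> c X = 1)) \<or>
            (card Y = b \<and> (\<forall>X. X \<subseteq> Y \<and> card X = d \<longrightarrow> c X = 2)))"
    if c: "\<forall>X. X \<subseteq> {..<b} \<and> card X = d \<longrightarrow> c X \<in> {1, 2}" for c :: "nat set \<Rightarrow> nat"
  proof (cases "\<exists>X. X \<subseteq> {..<b} \<and> card X = d \<and> c X = 1")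
    case True
    then obtain X where X: "X \<subseteq> {..<b}" "card X = d" "c X = 1" by blast
    have fX: "finite X" using X(1) finite_subset by blast
    have "\<forall>X'. X' \<subseteq> X \<and> card X' = d \<longrightarrow> c X' = 1"
    proof (intro allI impI)
      fix X' assume "X' \<subseteq> X \<and> card X' = d"
      then have "X' = X" using card_subset_eq[OF fX] X(2) by auto
      then show "c X' = 1" using X by simp
    qed
    then show ?thesis using X by blast
  next
    case False
    then have "\<forall>X. X \<subseteq> {..<b} \<and> card X = d \<longrightarrow> c X = 2" using c by blast
    then show ?thesis by (intro exI[of _ "{..<b}"]) auto
  qed
  have key2: "\<exists>Y. Y \<subseteq> {..<b} \<and>
           ((card Y = b \<and> (\<forall>X. X \<subseteq> Y \<and> card X = d \<longrightarrow> c X = 1)) \<or>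
            (card Y = d \<and> (\<forall>X. X \<subseteq> Y \<and> card X = d \<longrightarrow> c X = 2)))"
    if c: "\<forall>X. X \<subseteq> {..<b} \<and> card X = d \<longrightarrow> c X \<in> {1, 2}" for c :: "nat set \<Rightarrow> nat"
  proof (cases "\<exists>X. X \<subseteq> {..<b} \<and> card X = d \<and> c X = 2")
    case True
    then obtain X where X: "X \<subseteq> {..<b}" "card X = d" "c X = 2" by blast
    have fX: "finite X" using X(1) finite_subset by blast
    have "\<forall>X'. X' \<subseteq> X \<and> card X' = d \<longrightarrow> c X' = 2"
    proof (intro allI impI)
      fix X' assume "X' \<subseteq> X \<and> card X' = d"
      then have "X' = X" using card_subset_eq[OF fX] X(2) by auto
      then show "c X' = 2" using X by simp
    qed
    then show ?thesis using X by blast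
  next
    case False
    then have "\<forall>X. X \<subseteq> {..<b} \<and> card X = d \<longrightarrow> c X = 1" using c by blast
    then show ?thesis by (intro exI[of _ "{..<b}"]) auto
  qed
  show ?thesis unfolding ramsey_prop_def using key key2 by blast
qed

lemma card_le_R: "Y \<subseteq> {..<R} \<Longrightarrow> card Y \<le> (R::nat)"
  by (metis card_lessThan card_mono finite_lessThan)

lemma prop_unit_lower1:
  assumes "ramsey_prop d d b R"
  shows "b \<le> R"
proof -
  from assms obtain Y where Y: "Y \<subseteq> {..<R}" and
    H: "(card Y = d \<and> (\<forall>X. X \<subseteq> Y \<and> card X = d \<longrightarrow> (2::nat) = 1)) \<or>
        (card Y = b \<and> (\<forall>X. X \<subseteq> Y \<and> card X = d \<longrightarrow> (2::nat) = 2))"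
    unfolding ramsey_prop_def apply (drule_tac x="\<lambda>_. 2" in spec) by auto
  then show ?thesis using card_le_R[OF Y] by auto
qed

lemma prop_unit_lower2:
  assumes "ramsey_prop d b d R"
  shows "b \<le> R"
proof -
  from assms obtain Y where Y: "Y \<subseteq> {..<R}" and
    H: "(card Y = b \<and> (\<forall>X. X \<subseteq> Y \<and> card X = d \<longrightarrow> (1::nat) = 1)) \<or>
        (card Y = d \<and> (\<forall>X. X \<subseteq> Y \<and> card X = d \<longrightarrow> (1::nat) = 2))"
    unfolding ramsey_prop_def apply (drule_tac x="\<lambda>_. 1" in spec) by auto
  then show ?thesis using card_le_R[OF Y] by auto
qed

lemma hramsey_unit:
  assumes "1 \<le> d" "d \<le> b"
  shows "hramsey d d b = b" "hramsey d b d = b"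
proof -
  have "hramsey d d b \<le> b" using prop_unit[OF assms] by (intro hramsey_le) blast
  moreover have "b \<le> hramsey d d b" by (rule prop_unit_lower1[OF hramsey_prop])
  ultimately show "hramsey d d b = b" by simp
  have "hramsey d b d \<le> b" using prop_unit[OF assms] by (intro hramsey_le) blast
  moreover have "b \<le> hramsey d b d" by (rule prop_unit_lower2[OF hramsey_prop])
  ultimately show "hramsey d b d = b" by simp
qed


lemma vertices_mono: "B \<subseteq> B' \<Longrightarrow> vertices B \<subseteq> vertices B'"
  unfolding vertices_def by blast

lemma mu_set_finite: "finite A \<Longrightarrow> finite {card B | B. B \<subseteq> A \<and> vertices B \<subseteq> S}"
proof -
  assume "finite A"
  then have "finite (card ` Pow A)" by simp
  moreover have "{card B | B. B \<subseteq> A \<and> vertices B \<subseteq> S} \<subseteq> card ` Pow A" by blast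
  ultimately show ?thesis by (rule finite_subset[rotated])
qed

lemma vertices_empty: "vertices ({} :: 'a::euclidean_space set set) = {}"
  unfolding vertices_def using DIM_positive[where 'a='a] by auto

lemma mu_ge: "finite A \<Longrightarrow> B \<subseteq> A \<Longrightarrow> vertices B \<subseteq> S \<Longrightarrow> card B \<le> mu A S"
  unfolding mu_def by (rule Max_ge[OF mu_set_finite]) auto

lemma mu_obtain:
  fixes A :: "'a::euclidean_space set set"
  assumes "finite A"
  obtains B where "B \<subseteq> A" "vertices B \<subseteq> S" "card B = mu A S"
proof -
  have "card ({} :: 'a set set) \<in> {card B | B. B \<subseteq> A \<and> vertices B \<subseteq> S}"
    using vertices_empty[where 'a='a] by blast
  then have ne: "{card B | B. B \<subseteq> A \<and> vertices B \<subseteq> S} \<noteq> {}" by (intro notI) (simp only: empty_iff)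
  have "mu A S \<in> {card B | B. B \<subseteq> A \<and> vertices B \<subseteq> S}"
    unfolding mu_def by (rule Max_in[OF mu_set_finite[OF assms] ne])
  then obtain B where "mu A S = card B" "B \<subseteq> A" "vertices B \<subseteq> S" by (auto simp only: mem_Collect_eq)
  then show ?thesis using that by simp
qed

lemma mu_union:
  fixes A :: "'a::euclidean_space set set"
  assumes fin: "finite A"
  shows "mu A (T \<union> S) \<le> hramsey DIM('a) (mu A T + 1) (mu A S + 1) - 1"
proof -
  define a where "a = mu A T"
  define b where "b = mu A S"
  define R where "R = hramsey DIM('a) (a + 1) (b + 1)"
  obtain B where B: "B \<subseteq> A" "vertices B \<subseteq> T \<union> S" "card B = mu A (T \<union> S)"
    using mu_obtain[OF fin] by blast
  have finB: "finite B" using B(1) fin finite_subset by blast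
  have "card B < R"
  proof (rule ccontr)
    assume "\<not> card B < R"
    then obtain B0 where B0: "B0 \<subseteq> B" "card B0 = R" "finite B0"
      using obtain_subset_with_card_n by (metis not_less)
    then obtain f where f: "bij_betw f {0..<R} B0" using ex_bij_betw_nat_finite by metis
    have finj: "inj_on f {..<R}" and fim: "f ` {..<R} = B0"
      using f by (auto simp: bij_betw_def atLeast0LessThan)
    define c where "c X = (if \<exists>p. \<Inter>(f ` X) = {p} \<and> p \<notin> T then 2 else (1::nat))" for X
    have rp: "ramsey_prop DIM('a) (a + 1) (b + 1) R" unfolding R_def by (rule hramsey_prop)
    have cv: "\<forall>X. X \<subseteq> {..<R} \<and> card X = DIM('a) \<longrightarrow> c X \<in> {1, 2}" by (simp add: c_def)
    have "\<exists>Y. Y \<subseteq> {..<R} \<and> ((card Y = a + 1 \<and> (\<forall>X. X \<subseteq> Y \<and> card X = DIM('a) \<longrightarrow> c X = 1)) \<or>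
          (card Y = b + 1 \<and> (\<forall>X. X \<subseteq> Y \<and> card X = DIM('a) \<longrightarrow> c X = 2)))"
      by (rule mp[OF spec[OF rp[unfolded ramsey_prop_def], of c] cv])
    then obtain Y where Y: "Y \<subseteq> {..<R}" and
      H: "(card Y = a + 1 \<and> (\<forall>X. X \<subseteq> Y \<and> card X = DIM('a) \<longrightarrow> c X = 1)) \<or>
          (card Y = b + 1 \<and> (\<forall>X. X \<subseteq> Y \<and> card X = DIM('a) \<longrightarrow> c X = 2))"
      by blast
    have fYA: "f ` Y \<subseteq> A" using Y fim B0(1) B(1) by blast
    have cardfY: "card (f ` Y) = card Y" by (rule card_image[OF inj_on_subset[OF finj Y]])
    have pull: "\<exists>X. X \<subseteq> Y \<and> card X = card C \<and> f ` X = C" if C: "C \<subseteq> f ` Y" for C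
    proof -
      define X where "X = {y\<in>Y. f y \<in> C}"
      have XY: "X \<subseteq> Y" unfolding X_def by blast
      have "f ` X \<subseteq> C" unfolding X_def by blast
      moreover have "C \<subseteq> f ` X"
      proof
        fix z assume "z \<in> C"
        then obtain y where "y \<in> Y" "z = f y" using C by blast
        then show "z \<in> f ` X" unfolding X_def using \<open>z \<in> C\<close> by blast
      qed
      ultimately have fX: "f ` X = C" by (rule subset_antisym)
      have "X \<subseteq> {..<R}" using XY Y by (rule order_trans)
      then have "inj_on f X" by (rule inj_on_subset[OF finj])
      then have "card (f ` X) = card X" by (rule card_image)
      then show ?thesis using XY fX by auto
    qed
    show False
    proof (cases "card Y = a + 1 \<and> (\<forall>X. X \<subseteq> Y \<and> card X = DIM('a) \<longrightarrow> c X = 1)")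
      case True
      have "vertices (f ` Y) \<subseteq> T"
      proof
        fix p assume "p \<in> vertices (f ` Y)"
        then obtain C where C: "C \<subseteq> f ` Y" "card C = DIM('a)" "\<Inter>C = {p}"
          unfolding vertices_def by blast
        obtain X where X: "X \<subseteq> Y" "card X = card C" "f ` X = C" using pull[OF C(1)] by blast
        have "c X = 1" using True X C by auto
        then show "p \<in> T" using C X unfolding c_def by (auto split: if_splits)
      qed
      then have "card (f ` Y) \<le> a" using mu_ge[OF fin fYA] unfolding a_def by blast
      then show False using True cardfY by simp
    next
      case False
      then have F: "card Y = b + 1 \<and> (\<forall>X. X \<subseteq> Y \<and> card X = DIM('a) \<longrightarrow> c X = 2)" using H by blast
      have "vertices (f ` Y) \<subseteq> S"
      proof
        fix p assume p: "p \<in> vertices (f ` Y)"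
        then obtain C where C: "C \<subseteq> f ` Y" "card C = DIM('a)" "\<Inter>C = {p}"
          unfolding vertices_def by blast
        obtain X where X: "X \<subseteq> Y" "card X = card C" "f ` X = C" using pull[OF C(1)] by blast
        have "c X = 2" using F X C by auto
        then have "p \<notin> T" using C X unfolding c_def by (auto split: if_splits)
        moreover have "f ` Y \<subseteq> B" using Y fim B0(1) by blast
        then have "p \<in> T \<union> S" using vertices_mono p B(2) by blast
        ultimately show "p \<in> S" by blast
      qed
      then have "card (f ` Y) \<le> b" using mu_ge[OF fin fYA] unfolding b_def by blast
      then show False using F cardfY by simp
    qed
  qed
  then show ?thesis using B(3) unfolding R_def a_def b_def by simp
qed

lemma rfold_sub:
  assumes un: "\<And>X Y. m (X \<union> Y) \<le> f (m X) (m Y)"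
    and mono: "\<And>x y y'. (y::nat) \<le> y' \<Longrightarrow> f x y \<le> f x y'"
  shows "hs \<noteq> [] \<Longrightarrow> m (\<Union>(set hs)) \<le> rfold f (map m hs)"
proof (induction hs rule: induct_list012)
  case (3 x y zs)
  have "m (\<Union>(set (x # y # zs))) = m (x \<union> \<Union>(set (y # zs)))" by simp
  also have "\<dots> \<le> f (m x) (m (\<Union>(set (y # zs))))" by (rule un)
  also have "\<dots> \<le> f (m x) (rfold f (map m (y # zs)))" using 3 by (intro mono) simp
  finally show ?case by simp
qed auto


theorem mainTheorem7:
  fixes A :: "'a::euclidean_space set set"
  defines "d \<equiv> DIM('a)"
  defines "oplus \<equiv> (\<lambda>a b. hramsey d (a + 1) (b + 1) - 1)"
  assumes "d \<ge> 2"
      and "finite A" and "\<forall>H\<in>A. is_hyperplane H" and "card A \<ge> d - 1"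
  shows "tot_ord_unital_magma {d - 1..} oplus (d - 1)
     \<and> (\<forall>S. mu A S \<in> {d - 1..})
     \<and> set_monotone (mu A)
     \<and> H_subadditive (mu A) oplus"
proof -
  note d2 = assms(3) and fin = assms(4) and cA = assms(6)
  have op: "oplus x y = hramsey d (x + 1) (y + 1) - 1" for x y :: nat unfolding oplus_def by simp
  have dd: "d - 1 + 1 = d" using d2 by simp
  have magma: "tot_ord_unital_magma {d - 1..} oplus (d - 1)"
    unfolding tot_ord_unital_magma_def
  proof (intro conjI ballI allI impI)
    show "d - 1 \<in> {d - 1..}" by simp
  next
    fix x y assume x: "x \<in> {d - 1..}" and y: "y \<in> {d - 1..}"
    have "min (x + 1) (y + 1) \<le> hramsey d (x + 1) (y + 1)" by (rule hramsey_lower)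
    then show "oplus x y \<in> {d - 1..}" using x y unfolding op by auto
  next
    fix x assume x: "x \<in> {d - 1..}"
    have h1: "1 \<le> d" "d \<le> x + 1" using x d2 by auto
    show "oplus (d - 1) x = x" unfolding op dd using hramsey_unit(1)[OF h1] by simp
    show "oplus x (d - 1) = x" unfolding op dd using hramsey_unit(2)[OF h1] by simp
  next
    fix x x' y :: nat assume "x \<in> {d - 1..}" "x' \<in> {d - 1..}" "y \<in> {d - 1..}" "x \<le> x'"
    then have "hramsey d (x + 1) (y + 1) \<le> hramsey d (x' + 1) (y + 1)"
      by (intro hramsey_mono) auto
    then show "oplus x y \<le> oplus x' y" unfolding op by (rule diff_le_mono)
  next
    fix x x' y :: nat assume "x \<in> {d - 1..}" "x' \<in> {d - 1..}" "y \<in> {d - 1..}" "x \<le> x'"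
    then have "hramsey d (y + 1) (x + 1) \<le> hramsey d (y + 1) (x' + 1)"
      by (intro hramsey_mono) auto
    then show "oplus y x \<le> oplus y x'" unfolding op by (rule diff_le_mono)
  qed
  have range: "\<forall>S. mu A S \<in> {d - 1..}"
  proof
    fix S
    obtain B where B: "B \<subseteq> A" "card B = d - 1" "finite B"
      using obtain_subset_with_card_n[OF cA] by metis
    have "vertices B = {}"
    proof -
      have "\<not> (C \<subseteq> B \<and> card C = DIM('a))" for C
      proof
        assume C: "C \<subseteq> B \<and> card C = DIM('a)"
        then have "card C \<le> card B" using B(3) card_mono by blast
        then show False using C B(2) d2 unfolding d_def by simp
      qed
      then show ?thesis unfolding vertices_def by blast
    qed
    then have "card B \<le> mu A S" using mu_ge[OF fin B(1)] by simp
    then show "mu A S \<in> {d - 1..}" using B(2) by simp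
  qed
  have mono: "set_monotone (mu A)"
    unfolding set_monotone_def
  proof (intro allI impI)
    fix X Y :: "'a set" assume XY: "X \<subseteq> Y"
    obtain B where B: "B \<subseteq> A" "vertices B \<subseteq> X" "card B = mu A X" using mu_obtain[OF fin] by blast
    have "vertices B \<subseteq> Y" using B(2) XY by (rule order_trans)
    then show "mu A X \<le> mu A Y" using mu_ge[OF fin B(1)] B(3) by simp
  qed
  have sub: "H_subadditive (mu A) oplus"
    unfolding H_subadditive_def
  proof (intro allI impI)
    fix hs :: "'a set list"
    assume hs: "hs \<noteq> [] \<and> (\<forall>h\<in>set hs. is_open_halfspace h)"
    have un: "mu A (X \<union> Y) \<le> oplus (mu A X) (mu A Y)" for X Y
      unfolding op d_def by (rule mu_union[OF fin])
    have mo: "oplus x y \<le> oplus x y'" if "y \<le> y'" for x y y' :: nat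
      unfolding op using that by (intro diff_le_mono hramsey_mono) auto
    show "mu A (\<Union>(set hs)) \<le> rfold oplus (map (mu A) hs)"
      using rfold_sub[of "mu A" oplus, OF un mo] hs by blast
  qed
  show ?thesis using magma range mono sub by blast
qed

end
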